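(* Let $k\ge2$ be an integer, and let $G$ be a graph whose anticonnected components have size less than $|G|/k$. Then there is a complete $(k,|G|/k^2)$-blockade in $G$.
   Context: Graphs are finite and simple; $|G|$ is the number of vertices of $G$ and $\overline G$ its complement. $G$ is anticonnected if $\overline G$ is connected; an induced subgraph $F$ of $G$ is an anticonnected component of $G$ if $\overline F$ is a connected component of $\overline G$. A blockade in $G$ is a sequence $(B_1,\ldots,B_m)$ of disjoint subsets of $V(G)$, with length $m$ and width $\min_i|B_i|$; a $(k,w)$-blockade has length at least $k$ and width at least $w$. A blockade is complete in $G$ if for all distinct $i,j$, every vertex of $B_i$ is adjacent to every vertex of $B_j$. *)

theory Defs
  imports Complex_Main
begin

definition simple_graph :: "'a set \<Rightarrow> ('a \<Rightarrow> 'a \<Rightarrow> bool) \<Rightarrow> bool" where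
  "simple_graph V E \<longleftrightarrow> finite V \<and> (\<forall>x y. E x y \<longrightarrow> E y x)
     \<and> (\<forall>x. \<not> E x x) \<and> (\<forall>x y. E x y \<longrightarrow> x \<in> V \<and> y \<in> V)"

definition anti_adj :: "'a set \<Rightarrow> ('a \<Rightarrow> 'a \<Rightarrow> bool) \<Rightarrow> 'a \<Rightarrow> 'a \<Rightarrow> bool" where
  "anti_adj V E x y \<longleftrightarrow> x \<in> V \<and> y \<in> V \<and> x \<noteq> y \<and> \<not> E x y"

definition anticomponent :: "'a set \<Rightarrow> ('a \<Rightarrow> 'a \<Rightarrow> bool) \<Rightarrow> 'a \<Rightarrow> 'a set" where
  "anticomponent V E v = {u. (anti_adj V E)\<^sup>*\<^sup>* v u}"

definition anticomponents :: "'a set \<Rightarrow> ('a \<Rightarrow> 'a \<Rightarrow> bool) \<Rightarrow> 'a set set" where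
  "anticomponents V E = anticomponent V E ` V"

definition blockade :: "'a set \<Rightarrow> 'a set list \<Rightarrow> bool" where
  "blockade V Bs \<longleftrightarrow> (\<forall>i < length Bs. Bs ! i \<subseteq> V)
     \<and> (\<forall>i < length Bs. \<forall>j < length Bs. i \<noteq> j \<longrightarrow> Bs ! i \<inter> Bs ! j = {})"

definition blockade_width :: "'a set list \<Rightarrow> nat" where
  "blockade_width Bs = Min (card ` set Bs)"

definition complete_blockade :: "('a \<Rightarrow> 'a \<Rightarrow> bool) \<Rightarrow> 'a set list \<Rightarrow> bool" where
  "complete_blockade E Bs \<longleftrightarrow> (\<forall>i < length Bs. \<forall>j < length Bs. i \<noteq> j \<longrightarrow>
     (\<forall>x \<in> Bs ! i. \<forall>y \<in> Bs ! j. E x y))"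

definition kw_blockade :: "'a set \<Rightarrow> 'a set list \<Rightarrow> nat \<Rightarrow> real \<Rightarrow> bool" where
  "kw_blockade V Bs k w \<longleftrightarrow> blockade V Bs \<and> length Bs \<ge> k \<and> real (blockade_width Bs) \<ge> w"

end

theory Submission
  imports Defs
begin

definition aclosed :: "'a set \<Rightarrow> ('a \<Rightarrow> 'a \<Rightarrow> bool) \<Rightarrow> 'a set \<Rightarrow> bool" where
  "aclosed V E W \<longleftrightarrow> W \<subseteq> V \<and> (\<forall>x\<in>W. \<forall>y. anti_adj V E x y \<longrightarrow> y \<in> W)"

lemma anti_adj_sym:
  assumes "simple_graph V E" "anti_adj V E x y" shows "anti_adj V E y x"
  using assms unfolding simple_graph_def anti_adj_def by blast

lemma comp_sub:
  assumes "aclosed V E B" "x \<in> B" shows "anticomponent V E x \<subseteq> B"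
proof
  fix u assume "u \<in> anticomponent V E x"
  hence "(anti_adj V E)\<^sup>*\<^sup>* x u" unfolding anticomponent_def by simp
  thus "u \<in> B"
    by (induction rule: rtranclp_induct) (use assms in \<open>auto simp: aclosed_def\<close>)
qed

lemma comp_closed:
  assumes "x \<in> V" shows "aclosed V E (anticomponent V E x)"
proof -
  have "u \<in> V" if "(anti_adj V E)\<^sup>*\<^sup>* x u" for u
    using that by (induction rule: rtranclp_induct) (use assms in \<open>auto simp: anti_adj_def\<close>)
  moreover have "(anti_adj V E)\<^sup>*\<^sup>* x z" if "(anti_adj V E)\<^sup>*\<^sup>* x u" "anti_adj V E u z" for u z
    using that by auto
  ultimately show ?thesis unfolding aclosed_def anticomponent_def by blast
qed

lemma diff_closed:
  assumes "simple_graph V E" "aclosed V E W" "aclosed V E B"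
  shows "aclosed V E (W - B)"
  using assms anti_adj_sym[OF assms(1)] unfolding aclosed_def by blast

lemma find_block:
  assumes G: "simple_graph V E" and W: "aclosed V E W" and tW: "t \<le> real (card W)"
    and t0: "t > 0" and tM: "2 * t \<le> M"
    and comps: "\<forall>x\<in>V. real (card (anticomponent V E x)) < M"
  shows "\<exists>B. aclosed V E B \<and> B \<subseteq> W \<and> t \<le> real (card B) \<and> real (card B) < M"
proof -
  have finV: "finite V" using G by (simp add: simple_graph_def)
  define P where "P m \<longleftrightarrow> (\<exists>B. aclosed V E B \<and> B \<subseteq> W \<and> t \<le> real (card B) \<and> card B = m)" for m
  have "P (card W)" using W tW unfolding P_def by auto
  hence "P (LEAST m. P m)" by (rule LeastI)
  then obtain B where B: "aclosed V E B" "B \<subseteq> W" "t \<le> real (card B)"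
     and Bl: "card B = (LEAST m. P m)" unfolding P_def by blast
  have minB: "card B \<le> card B'" if "aclosed V E B'" "B' \<subseteq> W" "t \<le> real (card B')" for B'
    unfolding Bl by (rule Least_le) (use that in \<open>auto simp: P_def\<close>)
  have finB: "finite B" using B(1) finV unfolding aclosed_def by (meson finite_subset)
  have "card B > 0" using B(3) t0 by simp
  hence "B \<noteq> {}" by auto
  then obtain x where x: "x \<in> B" by auto
  have xV: "x \<in> V" using x B(1) unfolding aclosed_def by auto
  define C where "C = anticomponent V E x"
  have CB: "C \<subseteq> B" unfolding C_def by (rule comp_sub[OF B(1) x])
  have Ccl: "aclosed V E C" unfolding C_def by (rule comp_closed[OF xV])
  have CM: "real (card C) < M" using comps xV unfolding C_def by auto
  show ?thesis
  proof (cases "C = B")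
    case True thus ?thesis using B CM by auto
  next
    case False
    have xC: "x \<in> C" unfolding C_def anticomponent_def by simp
    have "card C < card B" using CB False finB by (simp add: psubset_card_mono)
    hence Ct: "real (card C) < t" using minB[OF Ccl] CB B(2) by fastforce
    have DB: "B - C \<subset> B" using xC x by auto
    have "card (B - C) < card B" using DB finB by (simp add: psubset_card_mono)
    hence Dt: "real (card (B - C)) < t"
      using minB[OF diff_closed[OF G B(1) Ccl]] B(2) by fastforce
    have "card B = card C + card (B - C)"
      using CB finB card_Diff_subset[of C B] card_mono[OF finB CB]
      by (metis finite_subset le_add_diff_inverse)
    hence "real (card B) < M" using Ct Dt tM by simp
    thus ?thesis using B by auto
  qed
qed

lemma many_blocks:
  assumes G: "simple_graph V E"
    and t0: "t > 0" and tM: "2 * t \<le> M"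
    and comps: "\<forall>x\<in>V. real (card (anticomponent V E x)) < M"
  shows "aclosed V E W \<Longrightarrow> \<exists>Bs. (\<forall>i<length Bs. aclosed V E (Bs!i) \<and> Bs!i \<subseteq> W \<and> t \<le> real (card (Bs!i)))
      \<and> (\<forall>i<length Bs. \<forall>j<length Bs. i \<noteq> j \<longrightarrow> Bs!i \<inter> Bs!j = {})
      \<and> real (card W) < (real (length Bs) + 1) * M"
proof (induction "card W" arbitrary: W rule: less_induct)
  case less
  have finV: "finite V" using G by (simp add: simple_graph_def)
  have finW: "finite W" using less.prems finV unfolding aclosed_def by (meson finite_subset)
  show ?case
  proof (cases "real (card W) < t")
    case True
    thus ?thesis using t0 tM by (intro exI[of _ "[]"]) auto
  next
    case False
    then obtain B where B: "aclosed V E B" "B \<subseteq> W" "t \<le> real (card B)" "real (card B) < M"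
      using find_block[OF G less.prems _ t0 tM comps] by force
    have W'cl: "aclosed V E (W - B)" by (rule diff_closed[OF G less.prems B(1)])
    have "card B > 0" using B(3) t0 by simp
    hence "B \<noteq> {}" by auto
    hence "W - B \<subset> W" using B(2) by auto
    hence "card (W - B) < card W" using finW by (simp add: psubset_card_mono)
    then obtain Bs where Bs: "\<forall>i<length Bs. aclosed V E (Bs!i) \<and> Bs!i \<subseteq> W - B \<and> t \<le> real (card (Bs!i))"
      "\<forall>i<length Bs. \<forall>j<length Bs. i \<noteq> j \<longrightarrow> Bs!i \<inter> Bs!j = {}"
      "real (card (W - B)) < (real (length Bs) + 1) * M"
      using less.hyps[OF _ W'cl] by blast
    have cardW: "card W = card B + card (W - B)"
      using B(2) finW card_Diff_subset[of B W] card_mono[OF finW B(2)]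
      by (metis finite_subset le_add_diff_inverse)
    show ?thesis
    proof (intro exI[of _ "B # Bs"] conjI allI impI)
      fix i assume "i < length (B # Bs)"
      thus "aclosed V E ((B # Bs) ! i)" "(B # Bs) ! i \<subseteq> W" "t \<le> real (card ((B # Bs) ! i))"
        using B Bs(1) by (cases i; force)+
    next
      fix i j assume ij: "i < length (B # Bs)" "j < length (B # Bs)" "i \<noteq> j"
      show "(B # Bs) ! i \<inter> (B # Bs) ! j = {}"
      proof (cases i)
        case 0
        then obtain j' where "j = Suc j'" using ij by (cases j) auto
        thus ?thesis using 0 ij Bs(1) by force
      next
        case (Suc i')
        show ?thesis
        proof (cases j)
          case 0 thus ?thesis using Suc ij Bs(1) by force
        next
          case (Suc j') thus ?thesis using \<open>i = Suc i'\<close> ij Bs(2) by force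
        qed
      qed
    next
      show "real (card W) < (real (length (B # Bs)) + 1) * M"
        using cardW B(4) Bs(3) by (simp add: algebra_simps)
    qed
  qed
qed

theorem lemma4p1:
  fixes V :: "'a set" and E :: "'a \<Rightarrow> 'a \<Rightarrow> bool" and k :: nat
  assumes "simple_graph V E"
    and "k \<ge> 2"
    and "\<forall>C \<in> anticomponents V E. real (card C) < real (card V) / real k"
  shows "\<exists>Bs. kw_blockade V Bs k (real (card V) / real k ^ 2) \<and> complete_blockade E Bs"
proof (cases "card V = 0")
  case True
  let ?Bs = "replicate k ({}::'a set)"
  have "set ?Bs = {{}}" using assms(2) by simp
  hence "blockade_width ?Bs = 0" unfolding blockade_width_def by simp
  thus ?thesis using True
    unfolding kw_blockade_def blockade_def complete_blockade_def
    by (intro exI[of _ ?Bs]) auto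
next
  case False
  define n where "n = real (card V)"
  define t where "t = n / real k ^ 2"
  define M where "M = n / real k"
  have n0: "n > 0" using False n_def by simp
  have k2: "real k \<ge> 2" using assms(2) by simp
  have t0: "t > 0" using n0 k2 t_def by simp
  have "2 * t \<le> M"
  proof -
    have "2 * t = (2 / real k) * M" unfolding t_def M_def by (simp add: power2_eq_square field_simps)
    also have "\<dots> \<le> 1 * M"
    proof (rule mult_right_mono)
      show "2 / real k \<le> 1" using k2 by simp
      show "0 \<le> M" using n0 k2 unfolding M_def by simp
    qed
    finally show ?thesis by simp
  qed
  note tM = this
  have comps: "\<forall>x\<in>V. real (card (anticomponent V E x)) < M"
    using assms(3) unfolding anticomponents_def M_def n_def by auto
  have Vcl: "aclosed V E V" unfolding aclosed_def anti_adj_def by auto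
  obtain Bs where Bs: "\<forall>i<length Bs. aclosed V E (Bs!i) \<and> Bs!i \<subseteq> V \<and> t \<le> real (card (Bs!i))"
      "\<forall>i<length Bs. \<forall>j<length Bs. i \<noteq> j \<longrightarrow> Bs!i \<inter> Bs!j = {}"
      "real (card V) < (real (length Bs) + 1) * M"
    using many_blocks[OF assms(1) t0 tM comps Vcl] by blast
  have "n < (real (length Bs) + 1) * (n / real k)" using Bs(3) n_def M_def by simp
  hence "n * real k < n * (real (length Bs) + 1)" using n0 k2 by (simp add: field_simps)
  hence "real k < real (length Bs) + 1" using n0 by (simp only: mult_less_cancel_left_pos)
  hence kl: "k \<le> length Bs" by linarith
  define Cs where "Cs = take k Bs"
  have lenC: "length Cs = k" using kl Cs_def by simp
  have C1: "\<forall>i<length Cs. aclosed V E (Cs!i) \<and> Cs!i \<subseteq> V \<and> t \<le> real (card (Cs!i))"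
    using Bs(1) lenC kl unfolding Cs_def by auto
  have C2: "\<forall>i<length Cs. \<forall>j<length Cs. i \<noteq> j \<longrightarrow> Cs!i \<inter> Cs!j = {}"
    using Bs(2) lenC kl unfolding Cs_def by auto
  have "Cs \<noteq> []" using lenC assms(2) by auto
  hence "blockade_width Cs \<in> card ` set Cs" unfolding blockade_width_def
    by (intro Min_in) auto
  then obtain i where i: "i < length Cs" "blockade_width Cs = card (Cs ! i)"
    by (auto simp: in_set_conv_nth)
  have wid: "real (blockade_width Cs) \<ge> t" using i C1 by auto
  have compl: "complete_blockade E Cs"
    unfolding complete_blockade_def
  proof (intro allI impI ballI)
    fix i j x y assume ij: "i < length Cs" "j < length Cs" "i \<noteq> j" and x: "x \<in> Cs ! i" and y: "y \<in> Cs ! j"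
    show "E x y"
    proof (rule ccontr)
      assume nE: "\<not> E x y"
      have "x \<noteq> y" using C2 ij x y by blast
      moreover have "x \<in> V" "y \<in> V" using C1 ij x y by blast+
      ultimately have "anti_adj V E x y" using nE unfolding anti_adj_def by simp
      hence "y \<in> Cs ! i" using C1 ij x unfolding aclosed_def by blast
      thus False using C2 ij y by blast
    qed
  qed
  show ?thesis
    using C1 C2 lenC wid compl unfolding kw_blockade_def blockade_def t_def n_def
    by (intro exI[of _ Cs]) auto
qed

end
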